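(* Assume (A1) and let $t_n\to\infty$. Let $\phi_n(u)=\frac{1}{\bar F^{(k)}(t_n)}\log(u/t_n)\mathbb I_{u>t_n}$ and $\psi(\phi_n,u)=\int_u^{+\infty}\phi_n(s)\,dF^{(k)}(s)$ for $u\ge0$. Then $\psi(\phi_n,u)=\gamma_{n,k}:=\int\phi_n\,dF^{(k)}$ if $u\le t_n$, and, for any $\delta>0$ with $-1/\gamma_k+\delta<0$, \[ \psi(\phi_n,u)=\log\Big(\frac{u}{t_n}\Big)\frac{\bar F^{(k)}(u)}{\bar F^{(k)}(t_n)}+\gamma_k\Big(\frac{u}{t_n}\Big)^{-1/\gamma_k}+\epsilon_n(u)\Big(\frac{u}{t_n}\Big)^{-1/\gamma_k+\delta}\quad\text{if } u>t_n, \] where $\sup_{u>t_n}|\epsilon_n(u)|\to0$ as $n\to\infty$.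
   Context: Let $K\ge 1$, fix $k\in\{1,\dots,K\}$. Let $X\ge0$ have continuous distribution and cause $\mathcal C\in\{1,\dots,K\}$; let $C\ge0$ be independent with continuous distribution function $G$, $\bar G=1-G$. Let $F^{(j)}(t)=P(X\le t,\mathcal C=j)$, $\bar F^{(j)}(t)=P(X>t,\mathcal C=j)$. Regular variation with index $\alpha$: $f(tx)/f(t)\to x^\alpha$ as $t\to\infty$ for all $x>0$. (A1): for every $j$, $\bar F^{(j)}$ is regularly varying with index $-1/\gamma_j$ ($\gamma_j>0$), and $\bar G$ regularly varying with index $-1/\gamma_C$ ($\gamma_C>0$). *)

theory Defs
  imports "HOL-Probability.Probability"
begin

definition regvar :: "(real \<Rightarrow> real) \<Rightarrow> real \<Rightarrow> bool" where
  "regvar f a \<longleftrightarrow> (\<forall>x>0. ((\<lambda>t. f (t * x) / f t) \<longlongrightarrow> x powr a) at_top)"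

definition subsurv :: "'a measure \<Rightarrow> ('a \<Rightarrow> real) \<Rightarrow> ('a \<Rightarrow> nat) \<Rightarrow> nat \<Rightarrow> real \<Rightarrow> real" where
  "subsurv M X D j t = measure M {\<omega> \<in> space M. X \<omega> > t \<and> D \<omega> = j}"

text \<open>Integral of phi with respect to dF^(j): E[phi(X) 1{cause = j}].\<close>
definition subint :: "'a measure \<Rightarrow> ('a \<Rightarrow> real) \<Rightarrow> ('a \<Rightarrow> nat) \<Rightarrow> nat \<Rightarrow> (real \<Rightarrow> real) \<Rightarrow> real" where
  "subint M X D j \<phi> = (\<integral>\<omega>. \<phi> (X \<omega>) * indicator {\<omega>. D \<omega> = j} \<omega> \<partial>M)"

definition psi :: "'a measure \<Rightarrow> ('a \<Rightarrow> real) \<Rightarrow> ('a \<Rightarrow> nat) \<Rightarrow> nat \<Rightarrow> (real \<Rightarrow> real) \<Rightarrow> real \<Rightarrow> real" where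
  "psi M X D j \<phi> u = subint M X D j (\<lambda>s. indicator {u<..} s * \<phi> s)"

end

theory Submission
  imports Defs
begin


lemma rv_pos:
  fixes f :: "real \<Rightarrow> real"
  assumes mono: "\<And>x y. x \<le> y \<Longrightarrow> f y \<le> f x" and nn: "\<And>x. 0 \<le> f x" and rv: "regvar f c"
  shows "f x > 0"
proof -
  have "((\<lambda>t. f (t * 1) / f t) \<longlongrightarrow> 1 powr c) at_top" by (rule rv[unfolded regvar_def, rule_format, OF zero_less_one])
  hence "eventually (\<lambda>t. f (t*1) / f t > 1/2) at_top" by (rule order_tendstoD) simp
  then obtain T where T: "\<And>t. t \<ge> T \<Longrightarrow> f (t*1) / f t > 1/2" by (auto simp: eventually_at_top_linorder)
  define t where "t = max T x"
  have "f (t*1) / f t > 1/2" using T t_def by simp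
  hence "f t \<noteq> 0" by auto
  hence "f t > 0" using nn[of t] by simp
  moreover have "f t \<le> f x" using mono t_def by simp
  ultimately show ?thesis by simp
qed

lemma potter:
  fixes f :: "real \<Rightarrow> real"
  assumes mono: "\<And>x y. x \<le> y \<Longrightarrow> f y \<le> f x" and nn: "\<And>x. 0 \<le> f x" and rv: "regvar f (-a)"
    and eta: "0 < \<eta>" "\<eta> < a"
  shows "\<exists>T>0. \<forall>s\<ge>T. \<forall>x\<ge>1. f (s*x) \<le> 2 powr a * x powr (\<eta> - a) * f s"
proof -
  have pos: "\<And>x. f x > 0" using rv_pos[OF mono nn rv] by blast
  have "((\<lambda>t. f (t * 2) / f t) \<longlongrightarrow> 2 powr (-a)) at_top" using rv unfolding regvar_def by auto
  moreover have "2 powr (-a) < 2 powr (\<eta> - a)" using eta by simp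
  ultimately have "eventually (\<lambda>t. f (t * 2) / f t < 2 powr (\<eta> - a)) at_top" by (rule order_tendstoD)
  then obtain T0 where T0: "\<And>t. t \<ge> T0 \<Longrightarrow> f (t * 2) / f t < 2 powr (\<eta> - a)"
    by (auto simp: eventually_at_top_linorder)
  define T where "T = max T0 1"
  have q: "f (t * 2) \<le> 2 powr (\<eta> - a) * f t" if "t \<ge> T" for t
    using T0[of t] that pos[of t] unfolding T_def by (simp add: divide_less_eq)
  have ind: "\<forall>s\<ge>T. \<forall>x. 1 \<le> x \<and> x \<le> 2^m \<longrightarrow> f (s*x) \<le> 2 powr a * x powr (\<eta> - a) * f s" for m
  proof (induction m)
    case 0
    show ?case
    proof (intro allI impI)
      fix s x :: real assume "s \<ge> T" "1 \<le> x \<and> x \<le> 2^0"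
      hence "x = 1" by simp
      moreover have "1 \<le> 2 powr a" using eta by (intro ge_one_powr_ge_zero) auto
      ultimately show "f (s*x) \<le> 2 powr a * x powr (\<eta> - a) * f s"
        using nn[of s] by (simp add: mult_le_cancel_right1)
    qed
  next
    case (Suc m)
    show ?case
    proof (intro allI impI)
      fix s x :: real assume s: "s \<ge> T" and x: "1 \<le> x \<and> x \<le> 2^Suc m"
      have s1: "s \<ge> 1" using s T_def by simp
      show "f (s*x) \<le> 2 powr a * x powr (\<eta> - a) * f s"
      proof (cases "x \<le> 2")
        case True
        have "f (s*x) \<le> f s" using mono[of s "s*x"] x s1 by simp
        also have "f s \<le> (2 powr a * x powr (\<eta> - a)) * f s"
        proof -
          have "2 powr (\<eta> - a) \<le> x powr (\<eta> - a)"
            using True x eta by (intro powr_mono2') auto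
          hence "2 powr a * 2 powr (\<eta> - a) \<le> 2 powr a * x powr (\<eta> - a)" by simp
          moreover have "2 powr a * 2 powr (\<eta> - a) = 2 powr \<eta>" by (simp add: powr_add[symmetric])
          moreover have "1 \<le> 2 powr \<eta>" using eta by (intro ge_one_powr_ge_zero) auto
          ultimately have "1 \<le> 2 powr a * x powr (\<eta> - a)" by linarith
          thus ?thesis using nn[of s] by (simp add: mult_le_cancel_right1)
        qed
        finally show ?thesis by simp
      next
        case False
        have "s*2 \<ge> T" using s s1 by simp
        moreover have "1 \<le> x/2 \<and> x/2 \<le> 2^m" using x False by simp
        ultimately have "f ((s*2)*(x/2)) \<le> 2 powr a * (x/2) powr (\<eta> - a) * f (s*2)"
          using Suc.IH by blast
        also have "\<dots> \<le> 2 powr a * (x/2) powr (\<eta> - a) * (2 powr (\<eta> - a) * f s)"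
          using q[OF s] by (intro mult_left_mono) auto
        also have "\<dots> = 2 powr a * ((x/2) powr (\<eta> - a) * 2 powr (\<eta> - a)) * f s" by simp
        also have "(x/2) powr (\<eta> - a) * 2 powr (\<eta> - a) = x powr (\<eta> - a)"
          using False by (simp add: powr_mult[symmetric])
        finally show ?thesis by simp
      qed
    qed
  qed
  show ?thesis
  proof (intro exI[of _ T] conjI allI impI)
    show "T > 0" unfolding T_def by simp
    fix s x :: real assume "s \<ge> T" "x \<ge> 1"
    obtain m where "x \<le> 2^m" using real_arch_pow[of 2 x] by (auto intro: less_imp_le)
    thus "f (s*x) \<le> 2 powr a * x powr (\<eta> - a) * f s" using ind[of m] \<open>s \<ge> T\<close> \<open>x \<ge> 1\<close> by blast
  qed
qed

lemma pow_bracket: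
  fixes r x :: real assumes "1 \<le> x" "1 < r"
  shows "\<exists>i. r^i \<le> x \<and> x < r^Suc i"
proof -
  obtain n where n: "x < r^n" using real_arch_pow[OF assms(2)] by blast
  have "\<forall>x. 1 \<le> x \<and> x < r^n \<longrightarrow> (\<exists>i. r^i \<le> x \<and> x < r^Suc i)"
  proof (induction n)
    case 0 then show ?case by auto
  next
    case (Suc n) then show ?case
      by (metis linorder_not_le)
  qed
  thus ?thesis using n assms by blast
qed

lemma unif:
  fixes f :: "real \<Rightarrow> real"
  assumes mono: "\<And>x y. x \<le> y \<Longrightarrow> f y \<le> f x" and nn: "\<And>x. 0 \<le> f x" and rv: "regvar f (-a)"
    and a: "0 < a" and Y: "1 \<le> Y" and th: "0 < \<theta>"
  shows "eventually (\<lambda>s. \<forall>x\<in>{1..Y}. \<bar>f (s*x) / f s - x powr (-a)\<bar> \<le> \<theta>) at_top"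
proof -
  have pos: "\<And>x. f x > 0" using rv_pos[OF mono nn rv] by blast
  define th' where "th' = min \<theta> 1"
  have th': "0 < th'" "th' \<le> \<theta>" "th' \<le> 1" using th unfolding th'_def by auto
  define b where "b = 1 - th'/2"
  have b: "0 < b" "b < 1" using th' unfolding b_def by auto
  define r where "r = b powr (-1/a)"
  have rpos: "r > 0" unfolding r_def using b by simp
  have rb: "r powr (-a) = b" unfolding r_def using b a by (simp add: powr_powr)
  have "ln r = (-1/a) * ln b" unfolding r_def using b by (simp add: ln_powr)
  moreover have "ln b < 0" using b by simp
  ultimately have "ln r > 0" using a by (simp add: divide_neg_pos)
  hence r1: "r > 1" using rpos by (simp add: ln_gt_zero_iff)
  obtain N where N: "Y < r^N" using real_arch_pow[OF r1] by blast
  define P where "P i = (r^i) powr (-a)" for i :: nat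
  have PS: "P (Suc i) = P i * b" for i
    unfolding P_def rb[symmetric] using rpos by (simp add: powr_mult[symmetric] mult.commute)
  have P1: "P i \<le> 1" for i
    unfolding P_def using powr_mono2'[of "-a" 1 "r^i"] a r1 by (simp add: one_le_power)
  have "\<forall>i\<in>{..Suc N}. eventually (\<lambda>s. dist (f (s * r^i) / f s) (P i) < th'/2) at_top"
  proof
    fix i assume "i \<in> {..Suc N}"
    have "((\<lambda>s. f (s * r^i) / f s) \<longlongrightarrow> P i) at_top"
      unfolding P_def by (rule rv[unfolded regvar_def, rule_format]) (use rpos in simp)
    thus "eventually (\<lambda>s. dist (f (s * r^i) / f s) (P i) < th'/2) at_top"
      by (rule tendstoD) (use th' in simp)
  qed
  hence "eventually (\<lambda>s. \<forall>i\<in>{..Suc N}. dist (f (s * r^i) / f s) (P i) < th'/2) at_top"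
    by (rule eventually_ball_finite[rotated]) simp
  moreover have "eventually (\<lambda>s. (0::real) < s) at_top" by (rule eventually_gt_at_top)
  ultimately show ?thesis
  proof eventually_elim
    case (elim s)
    show ?case
    proof
      fix x assume x: "x \<in> {1..Y}"
      obtain i where i: "r^i \<le> x" "x < r^Suc i" using pow_bracket[of x r] x r1 by auto
      have "r^i < r^N" using i x N by simp
      hence "i < N" using r1 power_less_imp_less_exp by blast
      hence iN: "i \<in> {..Suc N}" "Suc i \<in> {..Suc N}" by auto
      have e1: "\<bar>f (s * r^i) / f s - P i\<bar> < th'/2" using bspec[OF elim(1) iN(1)] by (simp only: dist_real_def)
      have e2: "\<bar>f (s * r^Suc i) / f s - P (Suc i)\<bar> < th'/2" using bspec[OF elim(1) iN(2)] by (simp only: dist_real_def)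
      have fpos: "f s > 0" by (rule pos)
      have u1: "f (s*x) \<le> f (s * r^i)" using mono i elim by (intro mono) (simp add: mult_left_mono)
      have u2: "f (s * r^Suc i) \<le> f (s*x)" using mono i elim by (intro mono) (simp add: mult_left_mono less_imp_le)
      have g1: "f (s*x) / f s \<le> f (s * r^i) / f s" using u1 fpos by (simp add: divide_right_mono)
      have g2: "f (s * r^Suc i) / f s \<le> f (s*x) / f s" using u2 fpos by (simp add: divide_right_mono)
      have ri_pos: "0 < r^i" using rpos by simp
      have p1: "x powr (-a) \<le> P i" unfolding P_def using powr_mono2'[of "-a" "r^i" x] a i ri_pos by simp
      have p2: "P (Suc i) \<le> x powr (-a)" unfolding P_def using powr_mono2'[of "-a" x "r^Suc i"] a i ri_pos x by simp
      have gap: "P i - P (Suc i) \<le> th'/2"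
      proof -
        have "P i - P (Suc i) = P i * (1 - b)" using PS by (simp add: algebra_simps)
        also have "\<dots> \<le> 1 * (1 - b)" using P1[of i] b by (intro mult_right_mono) auto
        finally show ?thesis unfolding b_def by simp
      qed
      show "\<bar>f (s*x) / f s - x powr (-a)\<bar> \<le> \<theta>"
        using e1[unfolded abs_less_iff] e2[unfolded abs_less_iff] g1 g2 p1 p2 gap th'
        unfolding abs_le_iff by linarith
    qed
  qed
qed

lemma weighted:
  fixes f :: "real \<Rightarrow> real"
  assumes mono: "\<And>x y. x \<le> y \<Longrightarrow> f y \<le> f x" and nn: "\<And>x. 0 \<le> f x" and rv: "regvar f (-a)"
    and d: "0 < \<delta>" "\<delta> < a" and rho: "0 < \<rho>"
  shows "eventually (\<lambda>s. \<forall>x\<ge>1. \<bar>f (s*x) / f s - x powr (-a)\<bar> \<le> \<rho> * x powr (\<delta> - a)) at_top"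
proof -
  have pos: "\<And>x. f x > 0" using rv_pos[OF mono nn rv] by blast
  define \<eta> where "\<eta> = \<delta>/2"
  have eta: "0 < \<eta>" "\<eta> < a" using d unfolding \<eta>_def by auto
  obtain T where T: "T > 0" "\<And>s x. s \<ge> T \<Longrightarrow> x \<ge> 1 \<Longrightarrow> f (s*x) \<le> 2 powr a * x powr (\<eta> - a) * f s"
    using potter[OF mono nn rv eta] by blast
  define B where "B = 2 powr a + 1"
  have B: "B > 0" unfolding B_def by (simp add: add_pos_nonneg)
  define Y where "Y = max 1 ((B/\<rho>) powr (1/\<eta>))"
  have Y1: "Y \<ge> 1" unfolding Y_def by simp
  have BY: "B * Y powr (-\<eta>) \<le> \<rho>"
  proof -
    have "(B/\<rho>) powr (1/\<eta>) \<le> Y" unfolding Y_def by simp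
    hence "((B/\<rho>) powr (1/\<eta>)) powr \<eta> \<le> Y powr \<eta>" using eta B rho by (intro powr_mono2) auto
    hence "B/\<rho> \<le> Y powr \<eta>" using eta B rho by (simp add: powr_powr)
    hence "B \<le> \<rho> * Y powr \<eta>" using rho by (simp add: divide_le_eq mult.commute)
    moreover have "Y powr (-\<eta>) = 1 / Y powr \<eta>" using Y1 by (simp add: powr_minus divide_inverse)
    moreover have "Y powr \<eta> > 0" using Y1 by simp
    ultimately show ?thesis by (simp add: divide_le_eq mult.commute)
  qed
  define \<theta> where "\<theta> = \<rho> * Y powr (\<delta> - a)"
  have th: "\<theta> > 0" unfolding \<theta>_def using rho Y1 by simp
  have ev: "eventually (\<lambda>s. \<forall>x\<in>{1..Y}. \<bar>f (s*x) / f s - x powr (-a)\<bar> \<le> \<theta>) at_top"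
    using unif[OF mono nn rv _ Y1 th] d by simp
  moreover have "eventually (\<lambda>s. s \<ge> T) at_top" by (rule eventually_ge_at_top)
  ultimately show ?thesis
  proof eventually_elim
    case (elim s)
    show ?case
    proof (intro allI impI)
      fix x :: real assume x: "x \<ge> 1"
      show "\<bar>f (s*x) / f s - x powr (-a)\<bar> \<le> \<rho> * x powr (\<delta> - a)"
      proof (cases "x \<le> Y")
        case True
        hence "\<bar>f (s*x) / f s - x powr (-a)\<bar> \<le> \<theta>" using elim x by auto
        also have "\<theta> \<le> \<rho> * x powr (\<delta> - a)" unfolding \<theta>_def
          using powr_mono2'[of "\<delta> - a" x Y] d x True rho by (intro mult_left_mono) auto
        finally show ?thesis .
      next
        case False
        have fs: "f s > 0" by (rule pos)
        have g0: "0 \<le> f (s*x) / f s" using nn fs by simp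
        have g1: "f (s*x) / f s \<le> 2 powr a * x powr (\<eta> - a)"
          using T(2)[OF elim(2) x] fs by (simp add: divide_le_eq)
        have p1: "x powr (-a) \<le> x powr (\<eta> - a)" using x eta by (intro powr_mono) auto
        have p0: "0 \<le> x powr (-a)" by simp
        have "\<bar>f (s*x) / f s - x powr (-a)\<bar> \<le> f (s*x) / f s + x powr (-a)" using g0 p0 by linarith
        also have "\<dots> \<le> B * x powr (\<eta> - a)" unfolding B_def using g1 p1 by (simp add: algebra_simps)
        also have "x powr (\<eta> - a) = x powr (-\<eta>) * x powr (\<delta> - a)"
          unfolding \<eta>_def using x by (simp add: powr_add[symmetric])
        also have "B * (x powr (-\<eta>) * x powr (\<delta> - a)) = (B * x powr (-\<eta>)) * x powr (\<delta> - a)" by simp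
        also have "\<dots> \<le> (B * Y powr (-\<eta>)) * x powr (\<delta> - a)"
          using False Y1 eta B powr_mono2'[of "-\<eta>" Y x] by (intro mult_right_mono mult_left_mono) auto
        also have "\<dots> \<le> \<rho> * x powr (\<delta> - a)" using BY by (intro mult_right_mono) auto
        finally show ?thesis .
      qed
    qed
  qed
qed

lemma lnint:
  fixes y z c :: real assumes "0 < y" "y < z" "0 \<le> c"
  shows "(\<integral>\<^sup>+x. ennreal (if y < x \<and> x < z then c / x else 0) \<partial>lborel) = ennreal (c * (ln z - ln y))"
proof -
  have H: "((\<lambda>x. c / x) has_integral (c * ln z - c * ln y)) {y..z}"
  proof (rule fundamental_theorem_of_calculus)
    show "y \<le> z" using assms by simp
    fix x assume x: "x \<in> {y..z}"
    hence "x > 0" using assms by simp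
    thus "((\<lambda>x. c * ln x) has_vector_derivative c / x) (at x within {y..z})"
      by (auto intro!: derivative_eq_intros simp: has_real_derivative_iff_has_vector_derivative[symmetric])
  qed
  hence I: "(\<integral>\<^sup>+x. ennreal (c / x) * indicator {y..z} x \<partial>lborel) = ennreal (c * ln z - c * ln y)"
    using nn_integral_has_integral_lebesgue'[OF _ H] assms by auto
  have "(\<integral>\<^sup>+x. ennreal (if y < x \<and> x < z then c / x else 0) \<partial>lborel)
      = (\<integral>\<^sup>+x. ennreal (c / x) * indicator {y..z} x \<partial>lborel)"
    apply (rule nn_integral_cong_AE)
    using AE_lborel_singleton[of y] AE_lborel_singleton[of z]
    by eventually_elim (auto simp: indicator_def)
  with I show ?thesis by (simp add: algebra_simps)
qed

lemma rep:
  fixes M :: "'a measure" and X :: "'a \<Rightarrow> real" and D :: "'a \<Rightarrow> nat"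
  assumes P: "prob_space M" and [measurable]: "X \<in> borel_measurable M" "D \<in> measurable M (count_space UNIV)"
    and s: "0 < s" "s < u" and fs: "subsurv M X D k s > 0"
  shows "(\<integral>\<^sup>+\<omega>. ennreal (indicator {u<..} (X \<omega>) * (1 / subsurv M X D k s * ln (X \<omega> / s) * indicator {s<..} (X \<omega>)) * indicator {\<omega>. D \<omega> = k} \<omega>) \<partial>M)
    = ennreal (ln (u/s) * subsurv M X D k u / subsurv M X D k s)
      + (\<integral>\<^sup>+x. ennreal (indicator {u/s<..} x * (subsurv M X D k (s*x) / subsurv M X D k s / x)) \<partial>lborel)"
proof -
  interpret prob_space M by (rule P)
  define f where "f = subsurv M X D k"
  define y where "y = u / s"
  define c where "c = 1 / f s"
  have y1: "y > 1" unfolding y_def using s by simp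
  have c0: "c > 0" unfolding c_def f_def using fs by simp
  have fe: "emeasure M {\<omega>\<in>space M. v < X \<omega> \<and> D \<omega> = k} = ennreal (f v)" for v
    unfolding f_def subsurv_def by (simp add: emeasure_eq_measure)
  have split: "ennreal (indicator {u<..} (X \<omega>) * (c * ln (X \<omega> / s) * indicator {s<..} (X \<omega>)) * indicator {\<omega>. D \<omega> = k} \<omega>)
     = ennreal (c * ln y) * indicator {\<omega>\<in>space M. u < X \<omega> \<and> D \<omega> = k} \<omega>
       + ennreal (if u < X \<omega> \<and> D \<omega> = k then c * (ln (X \<omega> / s) - ln y) else 0)" if \<omega>: "\<omega> \<in> space M" for \<omega>
  proof (cases "u < X \<omega> \<and> D \<omega> = k")
    case True
    have "X \<omega> / s > y" unfolding y_def using True s by (simp add: divide_strict_right_mono)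
    hence lg: "ln (X \<omega> / s) > ln y" using y1 by simp
    have "ln y > 0" using y1 by simp
    have "ennreal (c * ln (X \<omega> / s)) = ennreal (c * ln y) + ennreal (c * (ln (X \<omega> / s) - ln y))"
      using lg c0 \<open>ln y > 0\<close> by (subst ennreal_plus[symmetric]) (auto simp: algebra_simps)
    thus ?thesis using True s \<omega> by (simp add: indicator_def)
  next
    case False thus ?thesis by (auto simp: indicator_def)
  qed
  have "(\<integral>\<^sup>+\<omega>. ennreal (indicator {u<..} (X \<omega>) * (c * ln (X \<omega> / s) * indicator {s<..} (X \<omega>)) * indicator {\<omega>. D \<omega> = k} \<omega>) \<partial>M)
    = (\<integral>\<^sup>+\<omega>. ennreal (c * ln y) * indicator {\<omega>\<in>space M. u < X \<omega> \<and> D \<omega> = k} \<omega>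
       + ennreal (if u < X \<omega> \<and> D \<omega> = k then c * (ln (X \<omega> / s) - ln y) else 0) \<partial>M)"
    by (rule nn_integral_cong) (rule split)
  also have "\<dots> = (\<integral>\<^sup>+\<omega>. ennreal (c * ln y) * indicator {\<omega>\<in>space M. u < X \<omega> \<and> D \<omega> = k} \<omega> \<partial>M)
       + (\<integral>\<^sup>+\<omega>. ennreal (if u < X \<omega> \<and> D \<omega> = k then c * (ln (X \<omega> / s) - ln y) else 0) \<partial>M)"
    by (rule nn_integral_add) auto
  also have "(\<integral>\<^sup>+\<omega>. ennreal (c * ln y) * indicator {\<omega>\<in>space M. u < X \<omega> \<and> D \<omega> = k} \<omega> \<partial>M)
     = ennreal (ln y * f u / f s)"
  proof -
    have fu: "f u \<ge> 0" unfolding f_def subsurv_def by simp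
    have "ennreal (c * ln y) * ennreal (f u) = ennreal (ln y * f u / f s)"
      using c0 y1 fu by (subst ennreal_mult[symmetric]) (auto simp: c_def)
    thus ?thesis by (simp add: nn_integral_cmult_indicator fe)
  qed
  also have "(\<integral>\<^sup>+\<omega>. ennreal (if u < X \<omega> \<and> D \<omega> = k then c * (ln (X \<omega> / s) - ln y) else 0) \<partial>M)
     = (\<integral>\<^sup>+\<omega>. (\<integral>\<^sup>+x. ennreal (if u < X \<omega> \<and> D \<omega> = k \<and> y < x \<and> x < X \<omega> / s then c / x else 0) \<partial>lborel) \<partial>M)"
  proof (rule nn_integral_cong)
    fix \<omega> assume "\<omega> \<in> space M"
    show "ennreal (if u < X \<omega> \<and> D \<omega> = k then c * (ln (X \<omega> / s) - ln y) else 0)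
      = (\<integral>\<^sup>+x. ennreal (if u < X \<omega> \<and> D \<omega> = k \<and> y < x \<and> x < X \<omega> / s then c / x else 0) \<partial>lborel)"
    proof (cases "u < X \<omega> \<and> D \<omega> = k")
      case True
      have "X \<omega> / s > y" unfolding y_def using True s by (simp add: divide_strict_right_mono)
      thus ?thesis using True lnint[of y "X \<omega> / s" c] y1 c0 by simp
    next
      case False
      have "(\<lambda>x. ennreal (if u < X \<omega> \<and> D \<omega> = k \<and> y < x \<and> x < X \<omega> / s then c / x else 0)) = (\<lambda>x. 0)"
        using False by auto
      thus ?thesis using False by (simp only: if_False) auto
    qed
  qed
  also have "\<dots> = (\<integral>\<^sup>+x. (\<integral>\<^sup>+\<omega>. ennreal (if u < X \<omega> \<and> D \<omega> = k \<and> y < x \<and> x < X \<omega> / s then c / x else 0) \<partial>M) \<partial>lborel)"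
  proof -
    have PS: "pair_sigma_finite M lborel"
      unfolding pair_sigma_finite_def using sigma_finite_measure_axioms sigma_finite_lborel by auto
    show ?thesis
      by (rule pair_sigma_finite.Fubini'[OF PS, symmetric]) measurable
  qed
  also have "\<dots> = (\<integral>\<^sup>+x. ennreal (indicator {y<..} x * (f (s*x) / f s / x)) \<partial>lborel)"
  proof (rule nn_integral_cong)
    fix x :: real
    show "(\<integral>\<^sup>+\<omega>. ennreal (if u < X \<omega> \<and> D \<omega> = k \<and> y < x \<and> x < X \<omega> / s then c / x else 0) \<partial>M)
       = ennreal (indicator {y<..} x * (f (s*x) / f s / x))"
    proof (cases "y < x")
      case True
      have x0: "x > 0" using True y1 by simp
      have "(\<integral>\<^sup>+\<omega>. ennreal (if u < X \<omega> \<and> D \<omega> = k \<and> y < x \<and> x < X \<omega> / s then c / x else 0) \<partial>M)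
        = (\<integral>\<^sup>+\<omega>. ennreal (c / x) * indicator {\<omega>\<in>space M. s*x < X \<omega> \<and> D \<omega> = k} \<omega> \<partial>M)"
      proof (rule nn_integral_cong)
        fix \<omega> assume "\<omega> \<in> space M"
        have "s*y = u" unfolding y_def using s by simp
        moreover have "s*y < s*x" using True s by simp
        moreover have "(x < X \<omega> / s) = (s*x < X \<omega>)" using s by (simp add: field_simps)
        ultimately show "ennreal (if u < X \<omega> \<and> D \<omega> = k \<and> y < x \<and> x < X \<omega> / s then c / x else 0)
          = ennreal (c / x) * indicator {\<omega>\<in>space M. s*x < X \<omega> \<and> D \<omega> = k} \<omega>"
          using True \<open>\<omega> \<in> space M\<close> by (auto simp: indicator_def)
      qed
      also have "\<dots> = ennreal (c / x) * ennreal (f (s*x))"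
        by (simp add: nn_integral_cmult_indicator fe)
      also have "\<dots> = ennreal (indicator {y<..} x * (f (s*x) / f s / x))"
        using True x0 c0 by (simp add: ennreal_mult[symmetric] c_def f_def subsurv_def)
      finally show ?thesis .
    next
      case False thus ?thesis by simp
    qed
  qed
  finally show ?thesis unfolding c_def f_def y_def .
qed

lemma powint:
  fixes y c K :: real assumes "0 < y" "c < 0" "0 \<le> K"
  shows "(\<integral>\<^sup>+x. ennreal (indicator {y<..} x * (K * (x powr c / x))) \<partial>lborel) = ennreal (K * y powr c / (-c))"
proof -
  have "(\<integral>\<^sup>+x. ennreal (K * x powr (c - 1)) * indicator {y..} x \<partial>lborel) = ennreal (0 - K * y powr c / c)"
  proof (rule nn_integral_FTC_atLeast)
    show "(\<lambda>x. K * x powr (c - 1)) \<in> borel_measurable borel" by measurable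
    fix x :: real assume "y \<le> x"
    hence x: "x > 0" using assms by simp
    show "((\<lambda>x. K * x powr c / c) has_real_derivative K * x powr (c - 1)) (at x)"
      using x assms by (auto intro!: derivative_eq_intros)
    show "0 \<le> K * x powr (c - 1)" using assms by simp
  next
    have "((\<lambda>x. x powr c) \<longlongrightarrow> 0) at_top" using assms by (intro tendsto_neg_powr filterlim_ident) auto
    hence "((\<lambda>x. K * x powr c / c) \<longlongrightarrow> K * 0 / c) at_top" using assms by (intro tendsto_intros) auto
    thus "((\<lambda>x. K * x powr c / c) \<longlongrightarrow> 0) at_top" using assms by simp
  qed
  moreover have "(\<integral>\<^sup>+x. ennreal (indicator {y<..} x * (K * (x powr c / x))) \<partial>lborel)
      = (\<integral>\<^sup>+x. ennreal (K * x powr (c - 1)) * indicator {y..} x \<partial>lborel)"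
    apply (rule nn_integral_cong_AE)
    using AE_lborel_singleton[of y]
    apply eventually_elim
    using assms by (auto simp: indicator_def powr_diff)
  ultimately show ?thesis by simp
qed

theorem lemma9:
  fixes M :: "'a measure" and X C :: "'a \<Rightarrow> real" and D :: "'a \<Rightarrow> nat"
    and K k :: nat and \<gamma> :: "nat \<Rightarrow> real" and \<gamma>C :: real and t :: "nat \<Rightarrow> real"
  assumes "prob_space M"
    and X_meas: "X \<in> borel_measurable M" and D_meas: "D \<in> measurable M (count_space UNIV)"
    and C_meas: "C \<in> borel_measurable M"
    and X_nonneg: "\<forall>\<omega>\<in>space M. X \<omega> \<ge> 0" and C_nonneg: "\<forall>\<omega>\<in>space M. C \<omega> \<ge> 0"
    and K: "K \<ge> 1" and k: "k \<in> {1..K}"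
    and D_range: "\<forall>\<omega>\<in>space M. D \<omega> \<in> {1..K}"
    and X_cont: "continuous_on UNIV (\<lambda>s. measure M {\<omega> \<in> space M. X \<omega> \<le> s})"
    and C_cont: "continuous_on UNIV (\<lambda>s. measure M {\<omega> \<in> space M. C \<omega> \<le> s})"
    and indep: "\<forall>A\<in>sets borel. \<forall>B\<in>sets (borel \<Otimes>\<^sub>M count_space UNIV).
       measure M {\<omega> \<in> space M. C \<omega> \<in> A \<and> (X \<omega>, D \<omega>) \<in> B}
       = measure M {\<omega> \<in> space M. C \<omega> \<in> A} * measure M {\<omega> \<in> space M. (X \<omega>, D \<omega>) \<in> B}"
    and A1_F: "\<forall>j\<in>{1..K}. \<gamma> j > 0 \<and> regvar (subsurv M X D j) (- 1 / \<gamma> j)"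
    and A1_G: "\<gamma>C > 0"
      "regvar (\<lambda>s. 1 - measure M {\<omega> \<in> space M. C \<omega> \<le> s}) (- 1 / \<gamma>C)"
    and t_lim: "filterlim t at_top sequentially"
  defines "\<phi> \<equiv> (\<lambda>n u. 1 / subsurv M X D k (t n) * ln (u / t n) * indicator {t n<..} u)"
  shows "(\<forall>n u. 0 \<le> u \<and> u \<le> t n \<longrightarrow> psi M X D k (\<phi> n) u = subint M X D k (\<phi> n))
    \<and> (\<forall>\<delta>>0. - 1 / \<gamma> k + \<delta> < 0 \<longrightarrow>
        (\<exists>\<epsilon> :: nat \<Rightarrow> real \<Rightarrow> real.
          (\<forall>n u. 0 < t n \<and> t n < u \<longrightarrow>
             psi M X D k (\<phi> n) u =
               ln (u / t n) * subsurv M X D k u / subsurv M X D k (t n)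
               + \<gamma> k * (u / t n) powr (- 1 / \<gamma> k)
               + \<epsilon> n u * (u / t n) powr (- 1 / \<gamma> k + \<delta>))
          \<and> (\<forall>e>0. eventually (\<lambda>n. \<forall>u>t n. \<bar>\<epsilon> n u\<bar> \<le> e) sequentially)))"
  proof -
  interpret prob_space M by (rule assms(1))
  note [measurable] = X_meas D_meas
  define f where "f = subsurv M X D k"
  have gk: "\<gamma> k > 0" and rv0: "regvar f (- 1 / \<gamma> k)" using A1_F k unfolding f_def by auto
  define a where "a = 1 / \<gamma> k"
  have a0: "a > 0" using gk unfolding a_def by simp
  have ma: "- 1 / \<gamma> k = - a" unfolding a_def by simp
  have ga: "\<gamma> k = 1 / a" unfolding a_def using gk by simp
  have rv: "regvar f (-a)" using rv0 ma by simp
  have mono: "f y \<le> f x" if "x \<le> y" for x y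
  proof -
    have "{\<omega> \<in> space M. x < X \<omega> \<and> D \<omega> = k} \<in> sets M" by measurable
    thus ?thesis unfolding f_def subsurv_def using that by (intro finite_measure_mono) auto
  qed
  have nn: "0 \<le> f x" for x unfolding f_def subsurv_def by simp
  have pos: "0 < f x" for x using rv_pos[OF mono nn rv] by blast
  have f_borel[measurable]: "f \<in> borel_measurable borel"
  proof -
    have "mono (\<lambda>x. - f x)" using mono by (auto simp: mono_def)
    hence "(\<lambda>x. - f x) \<in> borel_measurable borel" by (rule borel_measurable_mono)
    hence "(\<lambda>x. - (- f x)) \<in> borel_measurable borel" by (rule borel_measurable_uminus)
    thus ?thesis by simp
  qed
  have phi_eq: "\<phi> n = (\<lambda>v. 1 / f (t n) * ln (v / t n) * indicator {t n<..} v)" for n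
    unfolding \<phi>_def f_def ..
  have P1: "\<forall>n u. 0 \<le> u \<and> u \<le> t n \<longrightarrow> psi M X D k (\<phi> n) u = subint M X D k (\<phi> n)"
  proof (intro allI impI)
    fix n u assume "0 \<le> u \<and> u \<le> t n"
    hence "(\<lambda>s. indicator {u<..} s * \<phi> n s) = \<phi> n" by (auto simp: \<phi>_def indicator_def fun_eq_iff)
    thus "psi M X D k (\<phi> n) u = subint M X D k (\<phi> n)" by (simp add: psi_def)
  qed
  have P2: "\<forall>\<delta>>0. - 1 / \<gamma> k + \<delta> < 0 \<longrightarrow>
        (\<exists>\<epsilon> :: nat \<Rightarrow> real \<Rightarrow> real.
          (\<forall>n u. 0 < t n \<and> t n < u \<longrightarrow>
             psi M X D k (\<phi> n) u =
               ln (u / t n) * subsurv M X D k u / subsurv M X D k (t n)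
               + \<gamma> k * (u / t n) powr (- 1 / \<gamma> k)
               + \<epsilon> n u * (u / t n) powr (- 1 / \<gamma> k + \<delta>))
          \<and> (\<forall>e>0. eventually (\<lambda>n. \<forall>u>t n. \<bar>\<epsilon> n u\<bar> \<le> e) sequentially))"
  proof (intro allI impI)
    fix \<delta> :: real assume d0: "\<delta> > 0" and dl: "- 1 / \<gamma> k + \<delta> < 0"
    have da: "\<delta> < a" using dl ma by simp
    define W where "W n u = (u / t n) powr (- 1 / \<gamma> k + \<delta>)" for n u
    define \<epsilon> where "\<epsilon> n u = (if 0 < t n \<and> t n < u then (psi M X D k (\<phi> n) u
       - ln (u / t n) * subsurv M X D k u / subsurv M X D k (t n)
       - \<gamma> k * (u / t n) powr (- 1 / \<gamma> k)) / W n u else 0)" for n u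
    show "\<exists>\<epsilon> :: nat \<Rightarrow> real \<Rightarrow> real.
          (\<forall>n u. 0 < t n \<and> t n < u \<longrightarrow>
             psi M X D k (\<phi> n) u =
               ln (u / t n) * subsurv M X D k u / subsurv M X D k (t n)
               + \<gamma> k * (u / t n) powr (- 1 / \<gamma> k)
               + \<epsilon> n u * (u / t n) powr (- 1 / \<gamma> k + \<delta>))
          \<and> (\<forall>e>0. eventually (\<lambda>n. \<forall>u>t n. \<bar>\<epsilon> n u\<bar> \<le> e) sequentially)"
    proof (intro exI[of _ \<epsilon>] conjI allI impI)
      fix n u assume nu: "0 < t n \<and> t n < u"
      have "W n u > 0" unfolding W_def using nu by simp
      thus "psi M X D k (\<phi> n) u =
               ln (u / t n) * subsurv M X D k u / subsurv M X D k (t n)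
               + \<gamma> k * (u / t n) powr (- 1 / \<gamma> k)
               + \<epsilon> n u * (u / t n) powr (- 1 / \<gamma> k + \<delta>)"
        unfolding \<epsilon>_def using nu by (simp add: W_def)
    next
      fix e :: real assume e: "e > 0"
      define \<rho> where "\<rho> = e * (a - \<delta>)"
      have \<rho>: "\<rho> > 0" using e da by (simp add: \<rho>_def)
      have evw: "eventually (\<lambda>s. \<forall>x\<ge>1. \<bar>f (s*x) / f s - x powr (-a)\<bar> \<le> \<rho> * x powr (\<delta> - a)) at_top"
        by (rule weighted[OF mono nn rv d0 da \<rho>])
      have Q: "eventually (\<lambda>s. 0 < s \<and> (\<forall>u>s. \<bar>psi M X D k (\<lambda>v. 1 / f s * ln (v / s) * indicator {s<..} v) u
          - ln (u/s) * f u / f s - \<gamma> k * (u/s) powr (- 1 / \<gamma> k)\<bar> \<le> e * (u/s) powr (- 1 / \<gamma> k + \<delta>))) at_top"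
        using evw eventually_gt_at_top[of "0::real"]
      proof eventually_elim
        case (elim s)
        show ?case
        proof (intro conjI allI impI)
          show "0 < s" by (rule elim(2))
          fix u assume us: "s < u"
          define y where "y = u / s"
          have y1: "y > 1" using us elim(2) by (simp add: y_def)
          have fs: "f s > 0" by (rule pos)
          define Jg where "Jg = (\<integral>\<^sup>+x. ennreal (indicator {y<..} x * (f (s*x) / f s / x)) \<partial>lborel)"
          have R: "(\<integral>\<^sup>+\<omega>. ennreal (indicator {u<..} (X \<omega>) * (1 / f s * ln (X \<omega> / s) * indicator {s<..} (X \<omega>)) * indicator {\<omega>. D \<omega> = k} \<omega>) \<partial>M)
             = ennreal (ln y * f u / f s) + Jg"
            unfolding Jg_def y_def f_def by (rule rep[OF assms(1) X_meas D_meas elim(2) us fs[unfolded f_def]])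
          have nng: "0 \<le> indicator {u<..} (X \<omega>) * (1 / f s * ln (X \<omega> / s) * indicator {s<..} (X \<omega>)) * indicator {\<omega>. D \<omega> = k} \<omega>" for \<omega>
          proof (cases "s < X \<omega>")
            case True
            hence "ln (X \<omega> / s) > 0" using elim(2) by simp
            thus ?thesis using fs by (simp add: indicator_def)
          next
            case False thus ?thesis by (simp add: indicator_def)
          qed
          have psi_eq: "psi M X D k (\<lambda>v. 1 / f s * ln (v / s) * indicator {s<..} v) u = enn2real (ennreal (ln y * f u / f s) + Jg)"
          proof -
            have "psi M X D k (\<lambda>v. 1 / f s * ln (v / s) * indicator {s<..} v) u
              = (\<integral>\<omega>. indicator {u<..} (X \<omega>) * (1 / f s * ln (X \<omega> / s) * indicator {s<..} (X \<omega>)) * indicator {\<omega>. D \<omega> = k} \<omega> \<partial>M)"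
              unfolding psi_def subint_def by simp
            also have "\<dots> = enn2real (\<integral>\<^sup>+\<omega>. ennreal (indicator {u<..} (X \<omega>) * (1 / f s * ln (X \<omega> / s) * indicator {s<..} (X \<omega>)) * indicator {\<omega>. D \<omega> = k} \<omega>) \<partial>M)"
              by (rule integral_eq_nn_integral) (measurable, use nng in simp)
            finally show ?thesis using R by simp
          qed
          define P where "P = y powr (-a) / a"
          define H where "H = \<rho> * y powr (\<delta> - a) / (a - \<delta>)"
          have IP: "(\<integral>\<^sup>+x. ennreal (indicator {y<..} x * (1 * (x powr (-a) / x))) \<partial>lborel) = ennreal P"
            using powint[of y "-a" 1] y1 a0 unfolding P_def by simp
          have IH: "(\<integral>\<^sup>+x. ennreal (indicator {y<..} x * (\<rho> * (x powr (\<delta> - a) / x))) \<partial>lborel) = ennreal H"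
            using powint[of y "\<delta> - a" \<rho>] y1 da \<rho> unfolding H_def by simp
          have ptw: "\<bar>f (s*x) / f s - x powr (-a)\<bar> \<le> \<rho> * x powr (\<delta> - a)" if "y < x" for x
            using elim(1) y1 that by auto
          have up: "Jg \<le> ennreal P + ennreal H"
          proof -
            have "Jg \<le> (\<integral>\<^sup>+x. ennreal (indicator {y<..} x * (1 * (x powr (-a) / x)))
                 + ennreal (indicator {y<..} x * (\<rho> * (x powr (\<delta> - a) / x))) \<partial>lborel)"
              unfolding Jg_def
            proof (rule nn_integral_mono)
              fix x :: real
              show "ennreal (indicator {y<..} x * (f (s*x) / f s / x)) \<le> ennreal (indicator {y<..} x * (1 * (x powr (-a) / x)))
                 + ennreal (indicator {y<..} x * (\<rho> * (x powr (\<delta> - a) / x)))"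
              proof (cases "y < x")
                case True
                have x0: "x > 0" using True y1 by simp
                have "f (s*x) / f s \<le> x powr (-a) + \<rho> * x powr (\<delta> - a)" using ptw[OF True] by (simp add: abs_le_iff)
                hence "f (s*x) / f s / x \<le> (x powr (-a) + \<rho> * x powr (\<delta> - a)) / x" using x0 by (intro divide_right_mono) auto
                also have "\<dots> = x powr (-a) / x + \<rho> * (x powr (\<delta> - a) / x)" by (simp add: add_divide_distrib)
                finally have "ennreal (f (s*x) / f s / x) \<le> ennreal (x powr (-a) / x + \<rho> * (x powr (\<delta> - a) / x))"
                  by (rule ennreal_leI)
                also have "\<dots> = ennreal (x powr (-a) / x) + ennreal (\<rho> * (x powr (\<delta> - a) / x))"
                  using x0 \<rho> by (intro ennreal_plus) auto
                finally show ?thesis using True by simp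
              next
                case False thus ?thesis by simp
              qed
            qed
            also have "\<dots> = ennreal P + ennreal H"
              using IP IH by (subst nn_integral_add) auto
            finally show ?thesis .
          qed
          have lo: "ennreal P \<le> Jg + ennreal H"
          proof -
            have "ennreal P \<le> (\<integral>\<^sup>+x. ennreal (indicator {y<..} x * (f (s*x) / f s / x))
                 + ennreal (indicator {y<..} x * (\<rho> * (x powr (\<delta> - a) / x))) \<partial>lborel)"
              unfolding IP[symmetric]
            proof (rule nn_integral_mono)
              fix x :: real
              show "ennreal (indicator {y<..} x * (1 * (x powr (-a) / x))) \<le> ennreal (indicator {y<..} x * (f (s*x) / f s / x))
                 + ennreal (indicator {y<..} x * (\<rho> * (x powr (\<delta> - a) / x)))"
              proof (cases "y < x")
                case True
                have x0: "x > 0" using True y1 by simp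
                have g0: "0 \<le> f (s*x) / f s" using nn fs by simp
                have "x powr (-a) \<le> f (s*x) / f s + \<rho> * x powr (\<delta> - a)" using ptw[OF True] by (simp add: abs_le_iff)
                hence "x powr (-a) / x \<le> (f (s*x) / f s + \<rho> * x powr (\<delta> - a)) / x" using x0 by (intro divide_right_mono) auto
                also have "\<dots> = f (s*x) / f s / x + \<rho> * (x powr (\<delta> - a) / x)" by (simp add: add_divide_distrib)
                finally have "ennreal (x powr (-a) / x) \<le> ennreal (f (s*x) / f s / x + \<rho> * (x powr (\<delta> - a) / x))"
                  by (rule ennreal_leI)
                also have "\<dots> = ennreal (f (s*x) / f s / x) + ennreal (\<rho> * (x powr (\<delta> - a) / x))"
                  using x0 \<rho> nn[of "s*x"] fs by (intro ennreal_plus) auto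
                finally show ?thesis using True by simp
              next
                case False thus ?thesis by simp
              qed
            qed
            also have "\<dots> = Jg + ennreal H"
              unfolding Jg_def using IH by (subst nn_integral_add) auto
            finally show ?thesis .
          qed
          have P0: "P \<ge> 0" unfolding P_def using a0 by simp
          have H0: "H \<ge> 0" unfolding H_def using \<rho> da by simp
          have fin: "Jg \<noteq> top" using up by (auto simp del: ennreal_plus simp: top_unique ennreal_plus[symmetric, OF P0 H0])
          define J where "J = enn2real Jg"
          have JJ: "Jg = ennreal J" unfolding J_def using fin by (metis ennreal_enn2real less_top)
          have J0: "J \<ge> 0" unfolding J_def by simp
          have J1: "J \<le> P + H" using up unfolding JJ by (simp del: ennreal_plus add: ennreal_plus[symmetric, OF P0 H0] ennreal_le_iff add_nonneg_nonneg P0 H0)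
          have J2: "P \<le> J + H" using lo unfolding JJ by (simp del: ennreal_plus add: ennreal_plus[symmetric, OF J0 H0] ennreal_le_iff add_nonneg_nonneg J0 H0)
          define L where "L = ln y * f u / f s"
          have L0: "L \<ge> 0" unfolding L_def using y1 nn[of u] fs by simp
          have psiv: "psi M X D k (\<lambda>v. 1 / f s * ln (v / s) * indicator {s<..} v) u = L + J"
            unfolding psi_eq JJ L_def[symmetric] using L0 J0 by (simp del: ennreal_plus add: ennreal_plus[symmetric, OF L0 J0])
          have Pe: "\<gamma> k * (u/s) powr (- 1 / \<gamma> k) = P" unfolding P_def y_def[symmetric] ma ga by simp
          have He: "e * (u/s) powr (- 1 / \<gamma> k + \<delta>) = H" unfolding H_def \<rho>_def y_def[symmetric] ma using da by simp
          show "\<bar>psi M X D k (\<lambda>v. 1 / f s * ln (v / s) * indicator {s<..} v) u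
            - ln (u/s) * f u / f s - \<gamma> k * (u/s) powr (- 1 / \<gamma> k)\<bar> \<le> e * (u/s) powr (- 1 / \<gamma> k + \<delta>)"
            unfolding psiv Pe He unfolding y_def[symmetric] L_def[symmetric] using J1 J2 by (simp add: abs_le_iff)
        qed
      qed
      have "eventually (\<lambda>n. 0 < t n \<and> (\<forall>u>t n. \<bar>psi M X D k (\<lambda>v. 1 / f (t n) * ln (v / t n) * indicator {t n<..} v) u
          - ln (u / t n) * f u / f (t n) - \<gamma> k * (u / t n) powr (- 1 / \<gamma> k)\<bar> \<le> e * (u / t n) powr (- 1 / \<gamma> k + \<delta>))) sequentially"
        using filterlim_iff[THEN iffD1, OF t_lim, rule_format, OF Q] by simp
      thus "eventually (\<lambda>n. \<forall>u>t n. \<bar>\<epsilon> n u\<bar> \<le> e) sequentially"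
      proof eventually_elim
        case (elim n)
        show ?case
        proof (intro allI impI)
          fix u assume u: "u > t n"
          have Wp: "W n u > 0" unfolding W_def using elim u by simp
          have "\<bar>\<epsilon> n u\<bar> = \<bar>psi M X D k (\<phi> n) u - ln (u / t n) * f u / f (t n) - \<gamma> k * (u / t n) powr (- 1 / \<gamma> k)\<bar> / W n u"
            unfolding \<epsilon>_def f_def using elim u Wp by simp
          also have "\<dots> \<le> e" using elim u Wp unfolding phi_eq by (simp add: divide_le_eq W_def)
          finally show "\<bar>\<epsilon> n u\<bar> \<le> e" .
        qed
      qed
    qed
  qed
  show ?thesis using P1 P2 by blast
qed

end
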